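(* The collineation $\phi$ permutes the elements of $\mathrm{orb}(\mathsf S_T)$, and it maps each element to an element of the same one of the following seven categories: (1) the singletons $\{T\},\{T^\phi\},\{T^{\phi^2}\}$; (2) Type-II slses (i.e. Type-II-$T$-, $T^\phi$- or $T^{\phi^2}$-slses); (3) Type-III slses; (4) $\mathcal P_{2,q}$; (5) $\mathbb{F}_q$-planes in $\mathrm{orb}(\mathsf S_T)$ with only Type II points and only Type III lines; (6) $\mathbb{F}_q$-planes in $\mathrm{orb}(\mathsf S_T)$ with only Type III points and only Type II lines; (7) $\mathbb{F}_q$-planes in $\mathrm{orb}(\mathsf S_T)$ with only Type III points and only Type III lines.
   Context: Let $q$ be a prime power, $\mathbb{F}_{q^3}^*=\mathbb{F}_{q^3}\setminus\{0\}$. Points of $\mathrm{PG}(2,q^3)$ have homogeneous coordinates $(x,y,z)$ and lines $[a,b,c]$. An $\mathbb{F}_q$-plane is a subplane of order $q$; its lines are those meeting it in $q+1$ points. Let $\phi$ be the collineation $(x,y,z)\mapsto(z^q,x^q,y^q)$ (on lines $[d,e,f]\mapsto[f^q,d^q,e^q]$), whose fixed points form $\mathcal P_{2,q}=\{(x,x^q,x^{q^2}):x\in\mathbb{F}_{q^3}^*\}$. A point has Type I, II, III according as its $\phi$-orbit is one point, three collinear points, three non-collinear points; a line has Type I, II, III according as its $\phi$-orbit is one line, three concurrent lines, three non-concurrent lines. Let $T=(0,0,1)$, $T^\phi=(1,0,0)$, $T^{\phi^2}=(0,1,0)$. Let $\psi_t:(x,y,z)\mapsto(tx,t^qy,t^{q^2}z)$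 for $t\in\mathbb{F}_{q^3}^*$, $\mathsf S_T=\{\psi_t\}$, and $\mathrm{orb}(\mathsf S_T)$ the set of point orbits of $\mathsf S_T$. Orbits of size $q^2+q+1$ contained in the line $T^\phi T^{\phi^2}$ (resp. $T^{\phi^2}T$, $TT^\phi$) are $T$-slses (resp. $T^\phi$-slses, $T^{\phi^2}$-slses); such an sls is Type-X if all its points have Type X. The remaining orbits other than $\{T\},\{T^\phi\},\{T^{\phi^2}\}$ are $\mathbb{F}_q$-planes. *)

theory Defs
  imports "HOL-Computational_Algebra.Primes"
begin

(* Vectors of F_{q^3}^3; a projective point (or line) is the set of nonzero
   scalar multiples of a nonzero vector. *)
type_synonym 'a vec3 = "'a \<times> 'a \<times> 'a"

definition smult3 :: "'a::field \<Rightarrow> 'a vec3 \<Rightarrow> 'a vec3" where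
  "smult3 c v = (case v of (x,y,z) \<Rightarrow> (c*x, c*y, c*z))"

definition pt :: "'a::field vec3 \<Rightarrow> 'a vec3 set" where
  "pt v = {smult3 c v | c. c \<noteq> 0}"

definition points :: "'a::field vec3 set set" where
  "points = {pt v | v. v \<noteq> (0,0,0)}"

abbreviation lines :: "'a::field vec3 set set" where
  "lines \<equiv> points"

definition dot3 :: "'a::field vec3 \<Rightarrow> 'a vec3 \<Rightarrow> 'a" where
  "dot3 v w = (case v of (x,y,z) \<Rightarrow> case w of (a,b,c) \<Rightarrow> a*x + b*y + c*z)"

definition inc :: "'a::field vec3 set \<Rightarrow> 'a vec3 set \<Rightarrow> bool" where
  "inc P L \<longleftrightarrow> (\<exists>v\<in>P. \<exists>w\<in>L. dot3 v w = 0)"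

definition line_pts :: "'a::field vec3 set \<Rightarrow> 'a vec3 set set" where
  "line_pts L = {P \<in> points. inc P L}"

definition collinear3 :: "'a::field vec3 set \<Rightarrow> 'a vec3 set \<Rightarrow> 'a vec3 set \<Rightarrow> bool" where
  "collinear3 P Q R \<longleftrightarrow> (\<exists>L\<in>lines. inc P L \<and> inc Q L \<and> inc R L)"

definition concurrent3 :: "'a::field vec3 set \<Rightarrow> 'a vec3 set \<Rightarrow> 'a vec3 set \<Rightarrow> bool" where
  "concurrent3 L M N \<longleftrightarrow> (\<exists>P\<in>points. inc P L \<and> inc P M \<and> inc P N)"

(* the collineation phi: (x,y,z) -> (z^q,x^q,y^q); on lines [d,e,f] -> [f^q,d^q,e^q],
   which is given by the same formula *)
definition phiv :: "nat \<Rightarrow> 'a::field vec3 \<Rightarrow> 'a vec3" where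
  "phiv q v = (case v of (x,y,z) \<Rightarrow> (z^q, x^q, y^q))"

definition phi :: "nat \<Rightarrow> 'a::field vec3 set \<Rightarrow> 'a vec3 set" where
  "phi q P = phiv q ` P"

definition psiv :: "nat \<Rightarrow> 'a::field \<Rightarrow> 'a vec3 \<Rightarrow> 'a vec3" where
  "psiv q t v = (case v of (x,y,z) \<Rightarrow> (t*x, t^q*y, t^(q^2)*z))"

definition psi :: "nat \<Rightarrow> 'a::field \<Rightarrow> 'a vec3 set \<Rightarrow> 'a vec3 set" where
  "psi q t P = psiv q t ` P"

definition ST_orbit :: "nat \<Rightarrow> 'a::field vec3 set \<Rightarrow> 'a vec3 set set" where
  "ST_orbit q P = {psi q t P | t. t \<noteq> 0}"

definition orbST :: "nat \<Rightarrow> 'a::field vec3 set set set" where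
  "orbST q = {ST_orbit q P | P. P \<in> points}"

definition pt_type1 :: "nat \<Rightarrow> 'a::field vec3 set \<Rightarrow> bool" where
  "pt_type1 q P \<longleftrightarrow> phi q P = P"

definition pt_type2 :: "nat \<Rightarrow> 'a::field vec3 set \<Rightarrow> bool" where
  "pt_type2 q P \<longleftrightarrow> card {P, phi q P, phi q (phi q P)} = 3
      \<and> collinear3 P (phi q P) (phi q (phi q P))"

definition pt_type3 :: "nat \<Rightarrow> 'a::field vec3 set \<Rightarrow> bool" where
  "pt_type3 q P \<longleftrightarrow> card {P, phi q P, phi q (phi q P)} = 3
      \<and> \<not> collinear3 P (phi q P) (phi q (phi q P))"

definition ln_type1 :: "nat \<Rightarrow> 'a::field vec3 set \<Rightarrow> bool" where
  "ln_type1 q L \<longleftrightarrow> phi q L = L"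

definition ln_type2 :: "nat \<Rightarrow> 'a::field vec3 set \<Rightarrow> bool" where
  "ln_type2 q L \<longleftrightarrow> card {L, phi q L, phi q (phi q L)} = 3
      \<and> concurrent3 L (phi q L) (phi q (phi q L))"

definition ln_type3 :: "nat \<Rightarrow> 'a::field vec3 set \<Rightarrow> bool" where
  "ln_type3 q L \<longleftrightarrow> card {L, phi q L, phi q (phi q L)} = 3
      \<and> \<not> concurrent3 L (phi q L) (phi q (phi q L))"

(* the points T, T^phi, T^phi^2 *)
definition T0 :: "'a::field vec3 set" where "T0 = pt (0,0,1)"
definition T1 :: "'a::field vec3 set" where "T1 = pt (1,0,0)"
definition T2 :: "'a::field vec3 set" where "T2 = pt (0,1,0)"

definition in_line_through :: "'a::field vec3 set set \<Rightarrow> 'a vec3 set \<Rightarrow> 'a vec3 set \<Rightarrow> bool" where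
  "in_line_through X A B \<longleftrightarrow> (\<exists>L\<in>lines. inc A L \<and> inc B L \<and> (\<forall>P\<in>X. inc P L))"

definition T_sls :: "nat \<Rightarrow> 'a::field vec3 set set \<Rightarrow> bool" where
  "T_sls q X \<longleftrightarrow> X \<in> orbST q \<and> card X = q^2+q+1 \<and> in_line_through X T1 T2"

definition Tphi_sls :: "nat \<Rightarrow> 'a::field vec3 set set \<Rightarrow> bool" where
  "Tphi_sls q X \<longleftrightarrow> X \<in> orbST q \<and> card X = q^2+q+1 \<and> in_line_through X T2 T0"

definition Tphi2_sls :: "nat \<Rightarrow> 'a::field vec3 set set \<Rightarrow> bool" where
  "Tphi2_sls q X \<longleftrightarrow> X \<in> orbST q \<and> card X = q^2+q+1 \<and> in_line_through X T0 T1"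

definition sls :: "nat \<Rightarrow> 'a::field vec3 set set \<Rightarrow> bool" where
  "sls q X \<longleftrightarrow> T_sls q X \<or> Tphi_sls q X \<or> Tphi2_sls q X"

definition P2q :: "nat \<Rightarrow> 'a::field vec3 set set" where
  "P2q q = {pt (x, x^q, x^(q^2)) | x. x \<noteq> 0}"

definition Fq_plane :: "nat \<Rightarrow> 'a::field vec3 set set \<Rightarrow> bool" where
  "Fq_plane q S \<longleftrightarrow> S \<subseteq> points
     \<and> (\<exists>A B C D. {A,B,C,D} \<subseteq> S \<and> card {A,B,C,D} = 4 \<and>
          \<not> collinear3 A B C \<and> \<not> collinear3 A B D \<and> \<not> collinear3 A C D \<and> \<not> collinear3 B C D)
     \<and> (\<forall>L\<in>lines. \<forall>M\<in>lines. L \<noteq> M \<and> card (line_pts L \<inter> S) \<ge> 2 \<and> card (line_pts M \<inter> S) \<ge> 2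
          \<longrightarrow> (\<forall>P\<in>points. inc P L \<and> inc P M \<longrightarrow> P \<in> S))
     \<and> (\<forall>L\<in>lines. card (line_pts L \<inter> S) \<ge> 2 \<longrightarrow> card (line_pts L \<inter> S) = q + 1)"

definition plane_lines :: "nat \<Rightarrow> 'a::field vec3 set set \<Rightarrow> 'a vec3 set set" where
  "plane_lines q S = {L \<in> lines. card (line_pts L \<inter> S) = q + 1}"

definition cat1 :: "'a::field vec3 set set \<Rightarrow> bool" where
  "cat1 X \<longleftrightarrow> X = {T0} \<or> X = {T1} \<or> X = {T2}"

definition cat2 :: "nat \<Rightarrow> 'a::field vec3 set set \<Rightarrow> bool" where
  "cat2 q X \<longleftrightarrow> sls q X \<and> (\<forall>P\<in>X. pt_type2 q P)"

definition cat3 :: "nat \<Rightarrow> 'a::field vec3 set set \<Rightarrow> bool" where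
  "cat3 q X \<longleftrightarrow> sls q X \<and> (\<forall>P\<in>X. pt_type3 q P)"

definition cat4 :: "nat \<Rightarrow> 'a::field vec3 set set \<Rightarrow> bool" where
  "cat4 q X \<longleftrightarrow> X = P2q q"

definition cat5 :: "nat \<Rightarrow> 'a::field vec3 set set \<Rightarrow> bool" where
  "cat5 q X \<longleftrightarrow> X \<in> orbST q \<and> Fq_plane q X \<and> (\<forall>P\<in>X. pt_type2 q P)
      \<and> (\<forall>L\<in>plane_lines q X. ln_type3 q L)"

definition cat6 :: "nat \<Rightarrow> 'a::field vec3 set set \<Rightarrow> bool" where
  "cat6 q X \<longleftrightarrow> X \<in> orbST q \<and> Fq_plane q X \<and> (\<forall>P\<in>X. pt_type3 q P)
      \<and> (\<forall>L\<in>plane_lines q X. ln_type2 q L)"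

definition cat7 :: "nat \<Rightarrow> 'a::field vec3 set set \<Rightarrow> bool" where
  "cat7 q X \<longleftrightarrow> X \<in> orbST q \<and> Fq_plane q X \<and> (\<forall>P\<in>X. pt_type3 q P)
      \<and> (\<forall>L\<in>plane_lines q X. ln_type3 q L)"

end

theory Submission
  imports Defs "HOL-Number_Theory.Residues"
begin


lemma ff_pow_card:
  fixes x :: "'a :: {finite,field}"
  shows "x ^ card (UNIV :: 'a set) = x"
proof (cases "x = 0")
  case False
  have "x * (\<Prod>y\<in>UNIV-{0}. x * y) = x * x ^ (card (UNIV :: 'a set) - 1) * \<Prod>(UNIV-{0})"
    by (simp add: prod.distrib mult_ac)
  also have "x * x ^ (card (UNIV :: 'a set) - 1) = x ^ Suc (card (UNIV :: 'a set) - 1)"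
    by (subst power_Suc) auto
  also have "Suc (card (UNIV :: 'a set) - 1) = card (UNIV :: 'a set)"
    using finite_UNIV_card_ge_0[where ?'a = 'a] by simp
  also have "(\<Prod>y\<in>UNIV-{0}. x * y) = (\<Prod>y\<in>UNIV-{0}. y)"
    by (rule prod.reindex_bij_witness[of _ "\<lambda>y. y / x" "\<lambda>y. x * y"]) (use False in auto)
  finally show ?thesis
    by simp
qed (use finite_UNIV_card_ge_0[where ?'a = 'a] in auto)

lemma ff_facts:
  fixes q :: nat
  assumes "\<exists>p k. prime p \<and> k \<ge> 1 \<and> q = p ^ k"
    and "card (UNIV :: 'a::{finite,field} set) = q ^ 3"
  shows "q > 0" "\<And>x::'a. x ^ (q^3) = x" "\<And>x y::'a. (x + y) ^ q = x ^ q + y ^ q"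
proof -
  obtain p k where pk: "prime p" "k \<ge> 1" "q = p ^ k" using assms(1) by blast
  show "q > 0" using pk prime_gt_0_nat by simp
  show "\<And>x::'a. x ^ (q^3) = x" using ff_pow_card assms(2) by metis
  have cp: "prime CHAR('a)"
    by (rule prime_CHAR_semidom) (simp add: finite_imp_CHAR_pos)
  have "CHAR('a) dvd p ^ (k*3)" using CHAR_dvd_CARD[where 'a='a] assms(2) pk
    by (simp add: power_mult)
  hence "CHAR('a) dvd p" using cp prime_dvd_power by blast
  hence "CHAR('a) = p" using cp pk by (simp add: primes_dvd_imp_eq)
  thus "\<And>x y::'a. (x + y) ^ q = x ^ q + y ^ q"
    using freshmans_dream'[OF cp] pk by simp
qed



locale frob =
  fixes q :: nat and ty :: "'a::field itself"
  assumes qpos: "q > 0"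
    and fid: "\<And>x::'a. x ^ (q^3) = x"
    and fadd: "\<And>x y::'a. (x + y) ^ q = x ^ q + y ^ q"
begin

lemma pow3: "(((x::'a) ^ q) ^ q) ^ q = x"
  using fid[of x] by (simp add: power_mult[symmetric] power3_eq_cube mult.assoc)

lemma pow_q2: "((x::'a) ^ (q^2)) ^ q = x"
  using fid[of x] by (simp add: power_mult[symmetric] power2_eq_square power3_eq_cube)

lemma phiv3: "phiv q (phiv q (phiv q (v::'a vec3))) = v"
  by (cases v) (simp add: phiv_def pow3)

lemma phi3: "phi q (phi q (phi q (P::'a vec3 set))) = P"
  by (simp add: phi_def image_image phiv3)

lemma phi_inj: "phi q (P::'a vec3 set) = phi q Q \<Longrightarrow> P = Q"
  by (metis phi3)

lemma inj_phi: "inj (phi q :: 'a vec3 set \<Rightarrow> _)"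
  by (meson injI phi_inj)

lemma phiv_smult: "phiv q (smult3 c (v::'a vec3)) = smult3 (c^q) (phiv q v)"
  by (cases v) (simp add: phiv_def smult3_def power_mult_distrib)

lemma phi_pt: "phi q (pt (v::'a vec3)) = pt (phiv q v)"
proof (intro equalityI subsetI)
  fix w assume "w \<in> phi q (pt v)"
  then obtain c :: 'a where c: "c \<noteq> 0" "w = phiv q (smult3 c v)"
    unfolding phi_def pt_def by blast
  then have "w = smult3 (c^q) (phiv q v)" "c^q \<noteq> 0" by (simp_all add: phiv_smult)
  then show "w \<in> pt (phiv q v)" unfolding pt_def by blast
next
  fix w assume "w \<in> pt (phiv q v)"
  then obtain d :: 'a where d: "d \<noteq> 0" "w = smult3 d (phiv q v)" unfolding pt_def by blast
  have "(d ^ (q^2)) ^ q = d" by (rule pow_q2)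
  then have "w = phiv q (smult3 (d ^ (q^2)) v)" using d by (simp add: phiv_smult)
  moreover have "smult3 (d ^ (q^2)) v \<in> pt v" using d unfolding pt_def by auto
  ultimately show "w \<in> phi q (pt v)" unfolding phi_def by blast
qed

lemma phiv_zero: "phiv q (v::'a vec3) = (0,0,0) \<longleftrightarrow> v = (0,0,0)"
  using qpos by (cases v) (auto simp: phiv_def)

lemma phi_points: "P \<in> (points :: 'a vec3 set set) \<Longrightarrow> phi q P \<in> points"
proof -
  assume "P \<in> points"
  then obtain v where "v \<noteq> (0,0,0)" "P = pt v" unfolding points_def by blast
  moreover have "phi q P = pt (phiv q v)" using \<open>P = pt v\<close> by (simp add: phi_pt)
  ultimately show ?thesis unfolding points_def using phiv_zero[of v] by blast
qed

lemma phi_points_iff: "phi q P \<in> (points :: 'a vec3 set set) \<longleftrightarrow> P \<in> points"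
  by (metis phi3 phi_points)

lemma dot_phiv: "dot3 (phiv q v) (phiv q (w::'a vec3)) = (dot3 v w) ^ q"
proof -
  obtain x y z where v: "v = (x,y,z)" by (cases v)
  obtain a b c where w: "w = (a,b,c)" by (cases w)
  have "(a*x + b*y + c*z) ^ q = (a*x)^q + (b*y)^q + (c*z)^q" by (simp only: fadd)
  then show ?thesis unfolding v w dot3_def phiv_def prod.case power_mult_distrib
    by (simp only: add.commute add.left_commute add.assoc)
qed

lemma inc_phi: "inc (P::'a vec3 set) L \<Longrightarrow> inc (phi q P) (phi q L)"
  unfolding inc_def phi_def using qpos by (force simp: dot_phiv)

lemma inc_phi_iff: "inc (phi q P) (phi q (L::'a vec3 set)) \<longleftrightarrow> inc P L"
  by (metis inc_phi phi3)

lemma ex_pre: "\<exists>P'. (P::'a vec3 set) = phi q P'"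
  by (metis phi3)

lemma collinear_phi: "collinear3 (phi q A) (phi q B) (phi q (C::'a vec3 set)) \<longleftrightarrow> collinear3 A B C"
proof
  assume "collinear3 A B C"
  then show "collinear3 (phi q A) (phi q B) (phi q C)"
    unfolding collinear3_def by (metis inc_phi phi_points)
next
  assume "collinear3 (phi q A) (phi q B) (phi q C)"
  then obtain L where "L \<in> lines" "inc (phi q A) L" "inc (phi q B) L" "inc (phi q C) L"
    unfolding collinear3_def by blast
  moreover obtain L' where "L = phi q L'" using ex_pre by blast
  ultimately show "collinear3 A B C"
    unfolding collinear3_def by (metis inc_phi_iff phi_points_iff)
qed

lemma concurrent_phi: "concurrent3 (phi q A) (phi q B) (phi q (C::'a vec3 set)) \<longleftrightarrow> concurrent3 A B C"
proof
  assume "concurrent3 A B C"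
  then show "concurrent3 (phi q A) (phi q B) (phi q C)"
    unfolding concurrent3_def by (metis inc_phi phi_points)
next
  assume "concurrent3 (phi q A) (phi q B) (phi q C)"
  then obtain P where "P \<in> points" "inc P (phi q A)" "inc P (phi q B)" "inc P (phi q C)"
    unfolding concurrent3_def by blast
  moreover obtain P' where "P = phi q P'" using ex_pre by blast
  ultimately show "concurrent3 A B C"
    unfolding concurrent3_def by (metis inc_phi_iff phi_points_iff)
qed

lemma set3_rot: "{phi q P, phi q (phi q P), phi q (phi q (phi q (P::'a vec3 set)))} = {P, phi q P, phi q (phi q P)}"
  by (auto simp: phi3)

lemma coll_rot: "collinear3 B C A \<longleftrightarrow> collinear3 A B C"
  unfolding collinear3_def by blast
lemma conc_rot: "concurrent3 B C A \<longleftrightarrow> concurrent3 A B C"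
  unfolding concurrent3_def by blast

lemma pt_type2_phi: "pt_type2 q (phi q (P::'a vec3 set)) \<longleftrightarrow> pt_type2 q P"
  unfolding pt_type2_def set3_rot by (simp add: phi3 coll_rot)
lemma pt_type3_phi: "pt_type3 q (phi q (P::'a vec3 set)) \<longleftrightarrow> pt_type3 q P"
  unfolding pt_type3_def set3_rot by (simp add: phi3 coll_rot)
lemma ln_type2_phi: "ln_type2 q (phi q (P::'a vec3 set)) \<longleftrightarrow> ln_type2 q P"
  unfolding ln_type2_def set3_rot by (simp add: phi3 conc_rot)
lemma ln_type3_phi: "ln_type3 q (phi q (P::'a vec3 set)) \<longleftrightarrow> ln_type3 q P"
  unfolding ln_type3_def set3_rot by (simp add: phi3 conc_rot)

lemma psiv_phiv: "phiv q (psiv q t (v::'a vec3)) = psiv q t (phiv q v)"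
proof -
  have "(t ^ (q^2)) ^ q = t" by (rule pow_q2)
  moreover have "(t ^ q) ^ q = t ^ (q^2)" by (simp add: power_mult[symmetric] power2_eq_square)
  ultimately show ?thesis
    by (cases v) (simp only: phiv_def psiv_def prod.case power_mult_distrib)
qed

lemma psi_phi: "phi q (psi q t (P::'a vec3 set)) = psi q t (phi q P)"
  by (simp add: phi_def psi_def image_image psiv_phiv)

lemma orbit_phi: "phi q ` ST_orbit q (P::'a vec3 set) = ST_orbit q (phi q P)"
proof
  show "phi q ` ST_orbit q P \<subseteq> ST_orbit q (phi q P)"
    unfolding ST_orbit_def by (auto simp: psi_phi)
  show "ST_orbit q (phi q P) \<subseteq> phi q ` ST_orbit q P"
  proof
    fix Y assume "Y \<in> ST_orbit q (phi q P)"
    then obtain t :: 'a where t: "t \<noteq> 0" "Y = psi q t (phi q P)" unfolding ST_orbit_def by blast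
    then have "Y = phi q (psi q t P)" by (simp add: psi_phi)
    moreover have "psi q t P \<in> ST_orbit q P" using t unfolding ST_orbit_def by blast
    ultimately show "Y \<in> phi q ` ST_orbit q P" by blast
  qed
qed

lemma orbST_phi: "X \<in> (orbST q :: 'a vec3 set set set) \<Longrightarrow> phi q ` X \<in> orbST q"
proof -
  assume "X \<in> orbST q"
  then obtain P where "P \<in> points" "X = ST_orbit q P" unfolding orbST_def by blast
  then have "phi q P \<in> points" "phi q ` X = ST_orbit q (phi q P)" by (auto simp: orbit_phi phi_points)
  then show ?thesis unfolding orbST_def by blast
qed

abbreviation F :: "'a vec3 set set \<Rightarrow> 'a vec3 set set" where "F X \<equiv> phi q ` X"

lemma F3: "F (F (F X)) = X"
  by (simp add: image_image phi3)

lemma bij_F: "bij_betw F (orbST q :: 'a vec3 set set set) (orbST q)"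
proof (rule bij_betw_imageI)
  show "inj_on F (orbST q)" by (rule inj_onI) (metis F3)
  show "F ` orbST q = orbST q"
  proof
    show "F ` orbST q \<subseteq> orbST q" using orbST_phi by blast
    show "orbST q \<subseteq> F ` orbST q"
    proof
      fix X :: "'a vec3 set set" assume "X \<in> orbST q"
      then have "F (F X) \<in> orbST q" using orbST_phi by blast
      then show "X \<in> F ` orbST q" using F3[of X] by (metis image_eqI)
    qed
  qed
qed

lemma card_F: "card (F X) = card X"
  by (rule card_image) (meson inj_phi inj_on_subset subset_UNIV)

lemma phiT: "phi q T0 = (T1::'a vec3 set)" "phi q T1 = (T2::'a vec3 set)" "phi q T2 = (T0::'a vec3 set)"
  using qpos by (simp_all add: T0_def T1_def T2_def phi_pt phiv_def power_0_left)

lemma in_line_F: "in_line_through X A B \<Longrightarrow> in_line_through (F X) (phi q A) (phi q B)"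
proof -
  assume "in_line_through X A B"
  then obtain L where L: "L \<in> lines" "inc A L" "inc B L" "\<forall>P\<in>X. inc P L"
    unfolding in_line_through_def by blast
  have "\<forall>P\<in>F X. inc P (phi q L)" using L(4) inc_phi by auto
  moreover have "phi q L \<in> lines" using L(1) by (rule phi_points)
  moreover have "inc (phi q A) (phi q L)" "inc (phi q B) (phi q L)" using L(2,3) by (simp_all add: inc_phi)
  ultimately show ?thesis unfolding in_line_through_def by blast
qed

lemma line_pts_phi: "line_pts (phi q L) = F (line_pts L)"
proof
  show "F (line_pts L) \<subseteq> line_pts (phi q L)"
    unfolding line_pts_def by (auto simp: phi_points inc_phi)
  show "line_pts (phi q L) \<subseteq> F (line_pts L)"
  proof
    fix P assume "P \<in> line_pts (phi q L)"
    moreover obtain P' where "P = phi q P'" using ex_pre by blast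
    ultimately show "P \<in> F (line_pts L)"
      unfolding line_pts_def by (auto simp: phi_points_iff inc_phi_iff)
  qed
qed

lemma line_pts_F: "line_pts (phi q L) \<inter> F S = F (line_pts L \<inter> S)"
  by (simp add: line_pts_phi image_Int inj_phi)

lemma card_lpF: "card (line_pts (phi q L) \<inter> F S) = card (line_pts L \<inter> S)"
  by (simp add: line_pts_F card_F)

lemma plane_lines_F: "plane_lines q (F S) = phi q ` plane_lines q S"
proof
  show "phi q ` plane_lines q S \<subseteq> plane_lines q (F S)"
    unfolding plane_lines_def by (auto simp: card_lpF phi_points)
  show "plane_lines q (F S) \<subseteq> phi q ` plane_lines q S"
  proof
    fix L assume "L \<in> plane_lines q (F S)"
    moreover obtain L' where "L = phi q L'" using ex_pre by blast
    ultimately show "L \<in> phi q ` plane_lines q S"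
      unfolding plane_lines_def by (auto simp: card_lpF phi_points_iff)
  qed
qed

lemma Fq_plane_F: "Fq_plane q S \<Longrightarrow> Fq_plane q (F S)"
proof -
  assume S: "Fq_plane q S"
  have S1: "S \<subseteq> points" using S unfolding Fq_plane_def by blast
  have S3: "\<forall>L\<in>lines. \<forall>M\<in>lines. L \<noteq> M \<and> card (line_pts L \<inter> S) \<ge> 2 \<and> card (line_pts M \<inter> S) \<ge> 2
          \<longrightarrow> (\<forall>P\<in>points. inc P L \<and> inc P M \<longrightarrow> P \<in> S)"
    using S unfolding Fq_plane_def by (elim conjE) assumption
  have S4: "\<forall>L\<in>lines. card (line_pts L \<inter> S) \<ge> 2 \<longrightarrow> card (line_pts L \<inter> S) = q + 1"
    using S unfolding Fq_plane_def by (elim conjE) assumption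
  have 1: "F S \<subseteq> points" using S1 phi_points by blast
  obtain A B C D where abcd: "{A,B,C,D} \<subseteq> S" "card {A,B,C,D} = 4"
    "\<not> collinear3 A B C" "\<not> collinear3 A B D" "\<not> collinear3 A C D" "\<not> collinear3 B C D"
    using S unfolding Fq_plane_def by (elim conjE exE) blast
  have c4: "card {phi q A, phi q B, phi q C, phi q D} = 4"
    using abcd(2) card_F[of "{A,B,C,D}"] by simp
  have sub: "{phi q A, phi q B, phi q C, phi q D} \<subseteq> F S" using abcd(1) by blast
  have 2: "\<exists>A B C D. {A,B,C,D} \<subseteq> F S \<and> card {A,B,C,D} = 4 \<and>
          \<not> collinear3 A B C \<and> \<not> collinear3 A B D \<and> \<not> collinear3 A C D \<and> \<not> collinear3 B C D"
    apply (rule exI[of _ "phi q A"], rule exI[of _ "phi q B"], rule exI[of _ "phi q C"], rule exI[of _ "phi q D"])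
    using c4 sub abcd(3-6) by (simp only: collinear_phi simp_thms)
  have 3: "\<forall>L\<in>lines. \<forall>M\<in>lines. L \<noteq> M \<and> card (line_pts L \<inter> F S) \<ge> 2 \<and> card (line_pts M \<inter> F S) \<ge> 2
          \<longrightarrow> (\<forall>P\<in>points. inc P L \<and> inc P M \<longrightarrow> P \<in> F S)"
  proof (intro ballI impI)
    fix L M P assume LM: "L \<in> lines" "M \<in> lines"
      and c: "L \<noteq> M \<and> card (line_pts L \<inter> F S) \<ge> 2 \<and> card (line_pts M \<inter> F S) \<ge> 2"
      and P: "P \<in> points" "inc P L \<and> inc P M"
    obtain L' where eL: "L = phi q L'" using ex_pre by blast
    obtain M' where eM: "M = phi q M'" using ex_pre by blast
    obtain P' where eP: "P = phi q P'" using ex_pre by blast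
    have "L' \<in> lines" "M' \<in> lines" "P' \<in> points" using LM P(1) eL eM eP phi_points_iff by auto
    moreover have "L' \<noteq> M'" using c eL eM by auto
    moreover have "card (line_pts L' \<inter> S) \<ge> 2" "card (line_pts M' \<inter> S) \<ge> 2"
      using c eL eM card_lpF by auto
    moreover have "inc P' L'" "inc P' M'" using P(2) eL eM eP inc_phi_iff by auto
    ultimately have "P' \<in> S" using S3 by meson
    then show "P \<in> F S" using eP by blast
  qed
  have 4: "\<forall>L\<in>lines. card (line_pts L \<inter> F S) \<ge> 2 \<longrightarrow> card (line_pts L \<inter> F S) = q + 1"
  proof (intro ballI impI)
    fix L assume L: "L \<in> lines" "card (line_pts L \<inter> F S) \<ge> 2"
    obtain L' where e: "L = phi q L'" using ex_pre by blast
    have "L' \<in> lines" using L(1) e phi_points_iff by auto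
    moreover have "card (line_pts L' \<inter> S) \<ge> 2" using L(2) e card_lpF by auto
    ultimately have "card (line_pts L' \<inter> S) = q + 1" using S4 by meson
    then show "card (line_pts L \<inter> F S) = q + 1" using e card_lpF by auto
  qed
  show ?thesis unfolding Fq_plane_def by (intro conjI 1 2 3 4)
qed

lemma P2q_F: "F (P2q q) = P2q q"
proof -
  have "phi q P = P" if hP: "P \<in> P2q q" for P :: "'a vec3 set"
  proof -
    obtain x :: 'a where x: "P = pt (x, x^q, x^(q^2))" using hP unfolding P2q_def by blast
    have "(x^q)^q = x^(q^2)" by (simp add: power_mult[symmetric] power2_eq_square)
    then show ?thesis using x by (simp add: phi_pt phiv_def pow_q2)
  qed
  then show ?thesis by simp
qed

lemma main:
  "bij_betw (\<lambda>X. phi q ` X) (orbST q :: 'a vec3 set set set) (orbST q)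
    \<and> (\<forall>X \<in> (orbST q :: 'a vec3 set set set).
         (cat1 X \<longrightarrow> cat1 (phi q ` X))
       \<and> (cat2 q X \<longrightarrow> cat2 q (phi q ` X))
       \<and> (cat3 q X \<longrightarrow> cat3 q (phi q ` X))
       \<and> (cat4 q X \<longrightarrow> cat4 q (phi q ` X))
       \<and> (cat5 q X \<longrightarrow> cat5 q (phi q ` X))
       \<and> (cat6 q X \<longrightarrow> cat6 q (phi q ` X))
       \<and> (cat7 q X \<longrightarrow> cat7 q (phi q ` X)))"
proof (intro conjI ballI)
  show "bij_betw (\<lambda>X. phi q ` X) (orbST q :: 'a vec3 set set set) (orbST q)" by (rule bij_F)
next
  fix X :: "'a vec3 set set" assume X: "X \<in> orbST q"
  have l1: "in_line_through X T1 T2 \<Longrightarrow> in_line_through (F X) T2 T0"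
    using in_line_F[of X T1 T2] phiT by simp
  have l2: "in_line_through X T2 T0 \<Longrightarrow> in_line_through (F X) T0 T1"
    using in_line_F[of X T2 T0] phiT by simp
  have l3: "in_line_through X T0 T1 \<Longrightarrow> in_line_through (F X) T1 T2"
    using in_line_F[of X T0 T1] phiT by simp
  have sls: "sls q X \<Longrightarrow> sls q (F X)"
    unfolding sls_def T_sls_def Tphi_sls_def Tphi2_sls_def
    using orbST_phi[of X] card_F[of X] l1 l2 l3 by (elim disjE conjE) simp_all
  show "cat1 X \<longrightarrow> cat1 (F X)" unfolding cat1_def using phiT by auto
  show "cat2 q X \<longrightarrow> cat2 q (F X)" unfolding cat2_def using sls pt_type2_phi by auto
  show "cat3 q X \<longrightarrow> cat3 q (F X)" unfolding cat3_def using sls pt_type3_phi by auto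
  show "cat4 q X \<longrightarrow> cat4 q (F X)" unfolding cat4_def using P2q_F by auto
  show "cat5 q X \<longrightarrow> cat5 q (F X)" unfolding cat5_def
    using orbST_phi Fq_plane_F pt_type2_phi ln_type3_phi by (auto simp: plane_lines_F)
  show "cat6 q X \<longrightarrow> cat6 q (F X)" unfolding cat6_def
    using orbST_phi Fq_plane_F pt_type3_phi ln_type2_phi by (auto simp: plane_lines_F)
  show "cat7 q X \<longrightarrow> cat7 q (F X)" unfolding cat7_def
    using orbST_phi Fq_plane_F pt_type3_phi ln_type3_phi by (auto simp: plane_lines_F)
qed

end



theorem lemma3p1:
  fixes q :: nat
  assumes "\<exists>p k. prime p \<and> k \<ge> 1 \<and> q = p ^ k"
    and "card (UNIV :: 'a::{finite,field} set) = q ^ 3"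
  shows "bij_betw (\<lambda>X. phi q ` X) (orbST q :: 'a vec3 set set set) (orbST q)
    \<and> (\<forall>X \<in> (orbST q :: 'a vec3 set set set).
         (cat1 X \<longrightarrow> cat1 (phi q ` X))
       \<and> (cat2 q X \<longrightarrow> cat2 q (phi q ` X))
       \<and> (cat3 q X \<longrightarrow> cat3 q (phi q ` X))
       \<and> (cat4 q X \<longrightarrow> cat4 q (phi q ` X))
       \<and> (cat5 q X \<longrightarrow> cat5 q (phi q ` X))
       \<and> (cat6 q X \<longrightarrow> cat6 q (phi q ` X))
       \<and> (cat7 q X \<longrightarrow> cat7 q (phi q ` X)))"
proof -
  have f: "q > 0" "\<And>x::'a. x ^ (q^3) = x" "\<And>x y::'a. (x + y) ^ q = x ^ q + y ^ q"
    using ff_facts[OF assms] by auto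
  interpret frob q "TYPE('a)" by standard (use f in auto)
  show ?thesis by (rule main)
qed

end
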